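(* Let $\mathcal{K}=\langle\mathcal{O},\mathcal{P}\rangle$ be a DL-safe hybrid knowledge base whose rules contain no function symbols, and let $\mathrm{lfp}(\mathrm{IFP}_{\mathcal{K}})=\langle I_T,I_F\rangle$ be its iterated fixpoint semantics. Then $\langle I_T,\ \mathrm{KA}(\mathcal{K})\setminus I_F\rangle$ is the alternating fixpoint partition $(P_\omega,N_\omega)$ of $\mathcal{K}$.
   Context: A hybrid knowledge base is a pair $\mathcal{K}=\langle\mathcal{O},\mathcal{P}\rangle$ where $\mathcal{O}$ is a set of description logic axioms (e.g. $\mathcal{ALC}$) and $\mathcal{P}$ is a finite set of normal rules $h\leftarrow a_1,\dots,a_n,\mathit{not}\,b_1,\dots,\mathit{not}\,b_r$. An atom in $\mathcal{P}$ is a DL-atom if its predicate occurs in $\mathcal{O}$; a rule is DL-safe if each of its variables occurs in some positive non-DL-atom of its body; $\mathcal{K}$ is DL-safe if all rules are. The grounding of $\mathcal{P}$ replaces variables by ground terms of $\mathcal{K}$ in all possible ways (here only constants, so it is finite). $\mathrm{KA}(\mathcal{K})$ is the set of ground atoms occurring in the grounding of $\mathcal{P}$. $\pi(\mathcal{O})$ is the standard first-order translation of the DL axioms and $O_{\mathcal{K},S}=\{\pi(\mathcal{O})\}\cup S$ for $S\subseteq\mathrm{KA}(\mathcal{K})$; $\models$ is first-order entailment. Iterated fixpoint semantics: a 3-valued interpretation is a pair $\langle I_T,I_F\rangle$ of disjoint subsets of $\mathrm{KA}(\mathcal{K})$ ($a$ true if $a\in I_T$, false if $a\in I_F$), ordered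 by $\langle I_T,I_F\rangle\le\langle I_T',I_F'\rangle$ iff $I_T\subseteq I_T'$ and $I_F\subseteq I_F'$. For $\mathcal{I}=\langle I_T,I_F\rangle$: $T^{\mathcal{K}}_{\mathcal{I}}(Tr)=\{a\in\mathrm{KA}(\mathcal{K})\mid$ some clause $a\leftarrow a_1,\dots,a_n,\mathit{not}\,b_1,\dots,\mathit{not}\,b_r$ of the grounding of $\mathcal{P}$ has each $a_i$ true in $\mathcal{I}$ or in $Tr$ and each $b_j$ false in $\mathcal{I}\}\cup\{a\in\mathrm{KA}(\mathcal{K})\mid O_{\mathcal{K},I_T\cup Tr}\models a\}$; $F^{\mathcal{K}}_{\mathcal{I}}(Fa)=\{a\in\mathrm{KA}(\mathcal{K})\mid O_{\mathcal{K},I_T}\models\neg a$, or for every clause $a\leftarrow a_1,\dots,a_n,\mathit{not}\,b_1,\dots,\mathit{not}\,b_r$ of the grounding of $\mathcal{P}$ some $a_i$ is false in $\mathcal{I}$ or in $Fa$, or some $b_j$ is true in $\mathcal{I}\}\cap\{a\in\mathrm{KA}(\mathcal{K})\mid O_{\mathcal{K},\mathrm{KA}(\mathcal{K})\setminus(I_F\cup Fa)}\not\models a\}$. These are monotonic; $\mathrm{IFP}_{\mathcal{K}}(\mathcal{I})=\langle\mathrm{lfp}(T^{\mathcal{K}}_{\mathcal{I}}),\mathrm{gfp}(F^{\mathcal{K}}_{\mathcal{I}})\rangle$ is monotonic w.r.t. $\le$, and the iterated fixpoint semantics is its least fixpoint $\mathrm{lfp}(\mathrm{IFP}_{\mathcal{K}})$.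 Alternating fixpoint partition (for the ground $\mathcal{K}$): for a positive (negation-free) ground $\mathcal{K}'=\langle\mathcal{O},\mathcal{P}'\rangle$ and $S\subseteq\mathrm{KA}(\mathcal{K})$, $R_{\mathcal{K}'}(S)$ is the set of heads of rules of $\mathcal{P}'$ whose body atoms all lie in $S$, $D_{\mathcal{K}'}(S)=\{a\in\mathrm{KA}(\mathcal{K})\mid O_{\mathcal{K},S}\models a\}$, and $T_{\mathcal{K}'}(S)=R_{\mathcal{K}'}(S)\cup D_{\mathcal{K}'}(S)$ (monotonic). For $S\subseteq\mathrm{KA}(\mathcal{K})$: $\mathcal{K}/S=\langle\mathcal{O},\mathcal{P}/S\rangle$ where $\mathcal{P}/S$ contains $h\leftarrow a_1,\dots,a_n$ for each ground rule $h\leftarrow a_1,\dots,a_n,\mathit{not}\,b_1,\dots,\mathit{not}\,b_r$ with $\{b_1,\dots,b_r\}\cap S=\emptyset$; $\mathcal{K}//S=\langle\mathcal{O},\mathcal{P}//S\rangle$ where $\mathcal{P}//S$ contains $h\leftarrow a_1,\dots,a_n$ for each such ground rule with $\{b_1,\dots,b_r\}\cap S=\emptyset$ and $O_{\mathcal{K},S}\not\models\neg h$. Let $\Gamma_{\mathcal{K}}(S)=\mathrm{lfp}(T_{\mathcal{K}/S})$ and $\Gamma'_{\mathcal{K}}(S)=\mathrm{lfp}(T_{\mathcal{K}//S})$. Define $P_0=\emptyset$, $N_0=\mathrm{KA}(\mathcal{K})$, $P_{n+1}=\Gamma_{\mathcal{K}}(N_n)$, $N_{n+1}=\Gamma'_{\mathcal{K}}(P_n)$,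 $P_\omega=\bigcup_i P_i$, $N_\omega=\bigcap_i N_i$. The pair $(P_\omega,N_\omega)$ is the alternating fixpoint partition of $\mathcal{K}$. *)

theory Defs
  imports Main "HOL-Library.Product_Order"
begin

text \<open>Predicates have type 'p, constants type 'c, variables type 'v.
  Concept names and role names of the ontology are predicates (unary resp. binary).\<close>

datatype ('p) concept =
    CTop | CBot | CName 'p | CNot "'p concept"
  | CAnd "'p concept" "'p concept" | COr "'p concept" "'p concept"
  | CEx 'p "'p concept" | CAll 'p "'p concept"

datatype ('p, 'c) axiom =
    GCI "'p concept" "'p concept"
  | CAssert "'p concept" 'c
  | RAssert 'p 'c 'c

datatype ('v, 'c) rterm = Var 'v | Cst 'c

datatype ('p, 't) atom = Atom 'p "'t list"

record ('p, 'v, 'c) rule =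
  head :: "('p, ('v, 'c) rterm) atom"
  pos  :: "('p, ('v, 'c) rterm) atom list"
  neg  :: "('p, ('v, 'c) rterm) atom list"

type_synonym ('p, 'c) gatom = "('p, 'c) atom"

text \<open>Ground rules: (head, positive body, negative body).\<close>
type_synonym ('p, 'c) grule = "('p, 'c) gatom \<times> ('p, 'c) gatom list \<times> ('p, 'c) gatom list"

fun concept_preds :: "'p concept \<Rightarrow> 'p set" where
  "concept_preds CTop = {}"
| "concept_preds CBot = {}"
| "concept_preds (CName A) = {A}"
| "concept_preds (CNot C) = concept_preds C"
| "concept_preds (CAnd C D) = concept_preds C \<union> concept_preds D"
| "concept_preds (COr C D) = concept_preds C \<union> concept_preds D"
| "concept_preds (CEx R C) = insert R (concept_preds C)"
| "concept_preds (CAll R C) = insert R (concept_preds C)"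

fun axiom_preds :: "('p, 'c) axiom \<Rightarrow> 'p set" where
  "axiom_preds (GCI C D) = concept_preds C \<union> concept_preds D"
| "axiom_preds (CAssert C a) = concept_preds C"
| "axiom_preds (RAssert R a b) = {R}"

fun axiom_consts :: "('p, 'c) axiom \<Rightarrow> 'c set" where
  "axiom_consts (GCI C D) = {}"
| "axiom_consts (CAssert C a) = {a}"
| "axiom_consts (RAssert R a b) = {a, b}"

definition onto_preds :: "('p, 'c) axiom set \<Rightarrow> 'p set" where
  "onto_preds Ont = (\<Union>ax\<in>Ont. axiom_preds ax)"

fun pred_of :: "('p, 't) atom \<Rightarrow> 'p" where
  "pred_of (Atom p ts) = p"

fun args_of :: "('p, 't) atom \<Rightarrow> 't list" where
  "args_of (Atom p ts) = ts"

fun term_vars :: "('v, 'c) rterm \<Rightarrow> 'v set" where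
  "term_vars (Var v) = {v}" | "term_vars (Cst c) = {}"

fun term_consts :: "('v, 'c) rterm \<Rightarrow> 'c set" where
  "term_consts (Var v) = {}" | "term_consts (Cst c) = {c}"

definition atom_vars :: "('p, ('v, 'c) rterm) atom \<Rightarrow> 'v set" where
  "atom_vars a = (\<Union>t\<in>set (args_of a). term_vars t)"

definition atom_consts :: "('p, ('v, 'c) rterm) atom \<Rightarrow> 'c set" where
  "atom_consts a = (\<Union>t\<in>set (args_of a). term_consts t)"

definition rule_atoms :: "('p, 'v, 'c) rule \<Rightarrow> ('p, ('v, 'c) rterm) atom set" where
  "rule_atoms r = insert (head r) (set (pos r) \<union> set (neg r))"

definition rule_vars :: "('p, 'v, 'c) rule \<Rightarrow> 'v set" where
  "rule_vars r = (\<Union>a\<in>rule_atoms r. atom_vars a)"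

definition rule_consts :: "('p, 'v, 'c) rule \<Rightarrow> 'c set" where
  "rule_consts r = (\<Union>a\<in>rule_atoms r. atom_consts a)"

definition is_DL_atom :: "('p, 'c) axiom set \<Rightarrow> ('p, 't) atom \<Rightarrow> bool" where
  "is_DL_atom Ont a \<longleftrightarrow> pred_of a \<in> onto_preds Ont"

definition DL_safe_rule :: "('p, 'c) axiom set \<Rightarrow> ('p, 'v, 'c) rule \<Rightarrow> bool" where
  "DL_safe_rule Ont r \<longleftrightarrow>
     (\<forall>v\<in>rule_vars r. \<exists>a\<in>set (pos r). \<not> is_DL_atom Ont a \<and> v \<in> atom_vars a)"

definition DL_safe :: "('p, 'c) axiom set \<Rightarrow> ('p, 'v, 'c) rule set \<Rightarrow> bool" where
  "DL_safe Ont P \<longleftrightarrow> (\<forall>r\<in>P. DL_safe_rule Ont r)"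

text \<open>Ground terms of K: the constants occurring in K (no function symbols).\<close>
definition KB_consts :: "('p, 'c) axiom set \<Rightarrow> ('p, 'v, 'c) rule set \<Rightarrow> 'c set" where
  "KB_consts Ont P = (\<Union>ax\<in>Ont. axiom_consts ax) \<union> (\<Union>r\<in>P. rule_consts r)"

fun subst_term :: "('v \<Rightarrow> 'c) \<Rightarrow> ('v, 'c) rterm \<Rightarrow> 'c" where
  "subst_term \<sigma> (Var v) = \<sigma> v" | "subst_term \<sigma> (Cst c) = c"

fun subst_atom :: "('v \<Rightarrow> 'c) \<Rightarrow> ('p, ('v, 'c) rterm) atom \<Rightarrow> ('p, 'c) gatom" where
  "subst_atom \<sigma> (Atom p ts) = Atom p (map (subst_term \<sigma>) ts)"

definition ground_rule :: "('v \<Rightarrow> 'c) \<Rightarrow> ('p, 'v, 'c) rule \<Rightarrow> ('p, 'c) grule" where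
  "ground_rule \<sigma> r = (subst_atom \<sigma> (head r), map (subst_atom \<sigma>) (pos r), map (subst_atom \<sigma>) (neg r))"

definition grounding :: "('p, 'c) axiom set \<Rightarrow> ('p, 'v, 'c) rule set \<Rightarrow> ('p, 'c) grule set" where
  "grounding Ont P = {ground_rule \<sigma> r | \<sigma> r. r \<in> P \<and> (\<forall>v\<in>rule_vars r. \<sigma> v \<in> KB_consts Ont P)}"

definition grule_atoms :: "('p, 'c) grule \<Rightarrow> ('p, 'c) gatom set" where
  "grule_atoms g = (case g of (h, ps, ns) \<Rightarrow> insert h (set ps \<union> set ns))"

definition KA :: "('p, 'c) axiom set \<Rightarrow> ('p, 'v, 'c) rule set \<Rightarrow> ('p, 'c) gatom set" where
  "KA Ont P = (\<Union>g\<in>grounding Ont P. grule_atoms g)"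

text \<open>First-order structures; the domain is a nonempty set (of naturals, which suffices
  for first-order entailment over the finite signature at hand by Loewenheim-Skolem).\<close>
record ('p, 'c) fo_struct =
  dom  :: "nat set"
  cint :: "'c \<Rightarrow> nat"
  pint :: "'p \<Rightarrow> nat list \<Rightarrow> bool"

definition wf_struct :: "('p, 'c) fo_struct \<Rightarrow> bool" where
  "wf_struct M \<longleftrightarrow> dom M \<noteq> {} \<and> (\<forall>c. cint M c \<in> dom M)"

fun csat :: "('p, 'c) fo_struct \<Rightarrow> 'p concept \<Rightarrow> nat \<Rightarrow> bool" where
  "csat M CTop x = True"
| "csat M CBot x = False"
| "csat M (CName A) x = pint M A [x]"
| "csat M (CNot C) x = (\<not> csat M C x)"
| "csat M (CAnd C D) x = (csat M C x \<and> csat M D x)"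
| "csat M (COr C D) x = (csat M C x \<or> csat M D x)"
| "csat M (CEx R C) x = (\<exists>y\<in>dom M. pint M R [x, y] \<and> csat M C y)"
| "csat M (CAll R C) x = (\<forall>y\<in>dom M. pint M R [x, y] \<longrightarrow> csat M C y)"

fun sat_axiom :: "('p, 'c) fo_struct \<Rightarrow> ('p, 'c) axiom \<Rightarrow> bool" where
  "sat_axiom M (GCI C D) = (\<forall>x\<in>dom M. csat M C x \<longrightarrow> csat M D x)"
| "sat_axiom M (CAssert C a) = csat M C (cint M a)"
| "sat_axiom M (RAssert R a b) = pint M R [cint M a, cint M b]"

fun holds :: "('p, 'c) fo_struct \<Rightarrow> ('p, 'c) gatom \<Rightarrow> bool" where
  "holds M (Atom p cs) = pint M p (map (cint M) cs)"

definition is_model :: "('p, 'c) axiom set \<Rightarrow> ('p, 'c) gatom set \<Rightarrow> ('p, 'c) fo_struct \<Rightarrow> bool" where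
  "is_model Ont S M \<longleftrightarrow> wf_struct M \<and> (\<forall>ax\<in>Ont. sat_axiom M ax) \<and> (\<forall>a\<in>S. holds M a)"

definition entails :: "('p, 'c) axiom set \<Rightarrow> ('p, 'c) gatom set \<Rightarrow> ('p, 'c) gatom \<Rightarrow> bool" where
  "entails Ont S a \<longleftrightarrow> (\<forall>M. is_model Ont S M \<longrightarrow> holds M a)"

definition entails_neg :: "('p, 'c) axiom set \<Rightarrow> ('p, 'c) gatom set \<Rightarrow> ('p, 'c) gatom \<Rightarrow> bool" where
  "entails_neg Ont S a \<longleftrightarrow> (\<forall>M. is_model Ont S M \<longrightarrow> \<not> holds M a)"

text \<open>3-valued interpretations are pairs (I_T, I_F); the order is the componentwise
  (product) order of HOL-Library.Product_Order.\<close>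

definition T_op :: "('p, 'c) axiom set \<Rightarrow> ('p, 'v, 'c) rule set
    \<Rightarrow> ('p, 'c) gatom set \<times> ('p, 'c) gatom set \<Rightarrow> ('p, 'c) gatom set \<Rightarrow> ('p, 'c) gatom set" where
  "T_op Ont P I Tr =
     {a \<in> KA Ont P. \<exists>ps ns. (a, ps, ns) \<in> grounding Ont P
        \<and> (\<forall>ai\<in>set ps. ai \<in> fst I \<or> ai \<in> Tr) \<and> (\<forall>b\<in>set ns. b \<in> snd I)}
   \<union> {a \<in> KA Ont P. entails Ont (fst I \<union> Tr) a}"

definition F_op :: "('p, 'c) axiom set \<Rightarrow> ('p, 'v, 'c) rule set
    \<Rightarrow> ('p, 'c) gatom set \<times> ('p, 'c) gatom set \<Rightarrow> ('p, 'c) gatom set \<Rightarrow> ('p, 'c) gatom set" where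
  "F_op Ont P I Fa =
     {a \<in> KA Ont P. entails_neg Ont (fst I) a
        \<or> (\<forall>ps ns. (a, ps, ns) \<in> grounding Ont P \<longrightarrow>
              (\<exists>ai\<in>set ps. ai \<in> snd I \<or> ai \<in> Fa) \<or> (\<exists>b\<in>set ns. b \<in> fst I))}
   \<inter> {a \<in> KA Ont P. \<not> entails Ont (KA Ont P - (snd I \<union> Fa)) a}"

definition IFP :: "('p, 'c) axiom set \<Rightarrow> ('p, 'v, 'c) rule set
    \<Rightarrow> ('p, 'c) gatom set \<times> ('p, 'c) gatom set \<Rightarrow> ('p, 'c) gatom set \<times> ('p, 'c) gatom set" where
  "IFP Ont P I = (lfp (T_op Ont P I), gfp (F_op Ont P I))"

text \<open>T_{K'} for a positive ground program P' (given as (head, body) pairs).\<close>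
definition T_pos :: "('p, 'c) axiom set \<Rightarrow> ('p, 'v, 'c) rule set
    \<Rightarrow> (('p, 'c) gatom \<times> ('p, 'c) gatom list) set \<Rightarrow> ('p, 'c) gatom set \<Rightarrow> ('p, 'c) gatom set" where
  "T_pos Ont P P' S = {h. \<exists>bs. (h, bs) \<in> P' \<and> set bs \<subseteq> S} \<union> {a \<in> KA Ont P. entails Ont S a}"

definition reduct1 :: "('p, 'c) axiom set \<Rightarrow> ('p, 'v, 'c) rule set \<Rightarrow> ('p, 'c) gatom set
    \<Rightarrow> (('p, 'c) gatom \<times> ('p, 'c) gatom list) set" where
  "reduct1 Ont P S = {(h, ps) | h ps ns. (h, ps, ns) \<in> grounding Ont P \<and> set ns \<inter> S = {}}"

definition reduct2 :: "('p, 'c) axiom set \<Rightarrow> ('p, 'v, 'c) rule set \<Rightarrow> ('p, 'c) gatom set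
    \<Rightarrow> (('p, 'c) gatom \<times> ('p, 'c) gatom list) set" where
  "reduct2 Ont P S = {(h, ps) | h ps ns. (h, ps, ns) \<in> grounding Ont P \<and> set ns \<inter> S = {}
                                       \<and> \<not> entails_neg Ont S h}"

definition Gamma :: "('p, 'c) axiom set \<Rightarrow> ('p, 'v, 'c) rule set \<Rightarrow> ('p, 'c) gatom set \<Rightarrow> ('p, 'c) gatom set" where
  "Gamma Ont P S = lfp (T_pos Ont P (reduct1 Ont P S))"

definition Gamma' :: "('p, 'c) axiom set \<Rightarrow> ('p, 'v, 'c) rule set \<Rightarrow> ('p, 'c) gatom set \<Rightarrow> ('p, 'c) gatom set" where
  "Gamma' Ont P S = lfp (T_pos Ont P (reduct2 Ont P S))"

fun PN :: "('p, 'c) axiom set \<Rightarrow> ('p, 'v, 'c) rule set \<Rightarrow> nat \<Rightarrow> ('p, 'c) gatom set \<times> ('p, 'c) gatom set" where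
  "PN Ont P 0 = ({}, KA Ont P)"
| "PN Ont P (Suc n) = (Gamma Ont P (snd (PN Ont P n)), Gamma' Ont P (fst (PN Ont P n)))"

definition P_omega :: "('p, 'c) axiom set \<Rightarrow> ('p, 'v, 'c) rule set \<Rightarrow> ('p, 'c) gatom set" where
  "P_omega Ont P = (\<Union>n. fst (PN Ont P n))"

definition N_omega :: "('p, 'c) axiom set \<Rightarrow> ('p, 'v, 'c) rule set \<Rightarrow> ('p, 'c) gatom set" where
  "N_omega Ont P = (\<Inter>n. snd (PN Ont P n))"

end

theory Submission
  imports Defs "HOL-Library.FuncSet"
begin

lemma entails_mono: "S \<subseteq> S' \<Longrightarrow> entails Ont S a \<Longrightarrow> entails Ont S' a"
  unfolding entails_def is_model_def by blast

lemma entails_neg_mono: "S \<subseteq> S' \<Longrightarrow> entails_neg Ont S a \<Longrightarrow> entails_neg Ont S' a"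
  unfolding entails_neg_def is_model_def by blast

lemma ground_in_KA:
  assumes "(h, ps, ns) \<in> grounding Ont P"
  shows "h \<in> KA Ont P" "set ps \<subseteq> KA Ont P" "set ns \<subseteq> KA Ont P"
  using assms unfolding KA_def grule_atoms_def by fastforce+

lemma mono_T_pos: "mono (T_pos Ont P P')"
  unfolding mono_def T_pos_def using entails_mono by blast

lemma T_pos_mono2: "P1 \<subseteq> P2 \<Longrightarrow> S1 \<subseteq> S2 \<Longrightarrow> T_pos Ont P P1 S1 \<subseteq> T_pos Ont P P2 S2"
  unfolding T_pos_def using entails_mono by blast

lemma Gamma_anti: "S1 \<subseteq> S2 \<Longrightarrow> Gamma Ont P S2 \<subseteq> Gamma Ont P S1"
  unfolding Gamma_def
  apply (rule lfp_mono)
  apply (rule T_pos_mono2)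
  unfolding reduct1_def by blast+

lemma Gamma'_anti: "S1 \<subseteq> S2 \<Longrightarrow> Gamma' Ont P S2 \<subseteq> Gamma' Ont P S1"
  unfolding Gamma'_def
  apply (rule lfp_mono)
  apply (rule T_pos_mono2)
  unfolding reduct2_def using entails_neg_mono by blast+

lemma T_pos_sub_KA1: "T_pos Ont P (reduct1 Ont P S) (KA Ont P) \<subseteq> KA Ont P"
  unfolding T_pos_def reduct1_def using ground_in_KA by blast

lemma T_pos_sub_KA2: "T_pos Ont P (reduct2 Ont P S) (KA Ont P) \<subseteq> KA Ont P"
  unfolding T_pos_def reduct2_def using ground_in_KA by blast

lemma Gamma_sub: "Gamma Ont P S \<subseteq> KA Ont P"
  unfolding Gamma_def by (rule lfp_lowerbound) (rule T_pos_sub_KA1)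

lemma Gamma'_sub: "Gamma' Ont P S \<subseteq> KA Ont P"
  unfolding Gamma'_def by (rule lfp_lowerbound) (rule T_pos_sub_KA2)

lemma PN_sub: "fst (PN Ont P n) \<subseteq> KA Ont P \<and> snd (PN Ont P n) \<subseteq> KA Ont P"
  by (cases n) (auto simp: Gamma_sub Gamma'_sub)

lemma PN_chain: "fst (PN Ont P n) \<subseteq> fst (PN Ont P (Suc n)) \<and> snd (PN Ont P (Suc n)) \<subseteq> snd (PN Ont P n)"
proof (induction n)
  case 0
  then show ?case using Gamma'_sub by simp
next
  case (Suc n)
  then show ?case by (simp add: Gamma_anti Gamma'_anti)
qed

lemma mono_T_op: fixes Ont :: "('p, 'c) axiom set" shows "mono (T_op Ont P I)"
proof (rule monoI)
  fix X Y :: "('p, 'c) gatom set" assume "X \<subseteq> Y"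
  then show "T_op Ont P I X \<subseteq> T_op Ont P I Y"
    unfolding T_op_def using entails_mono[of "fst I \<union> X" "fst I \<union> Y" Ont]
    by blast
qed

lemma F_op_mono2:
  fixes Ont :: "('p, 'c) axiom set"
  assumes "fst I \<subseteq> fst J" "snd I \<subseteq> snd J" "X \<subseteq> Y"
  shows "F_op Ont P I X \<subseteq> F_op Ont P J Y"
proof
  fix a assume a: "a \<in> F_op Ont P I X"
  have s: "KA Ont P - (snd J \<union> Y) \<subseteq> KA Ont P - (snd I \<union> X)" using assms by blast
  have 1: "\<not> entails Ont (KA Ont P - (snd J \<union> Y)) a"
    using a entails_mono[OF s] unfolding F_op_def by blast
  have 2: "entails_neg Ont (fst J) a
        \<or> (\<forall>ps ns. (a, ps, ns) \<in> grounding Ont P \<longrightarrow>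
              (\<exists>ai\<in>set ps. ai \<in> snd J \<or> ai \<in> Y) \<or> (\<exists>b\<in>set ns. b \<in> fst J))"
    using a entails_neg_mono[OF assms(1)] assms unfolding F_op_def by blast
  show "a \<in> F_op Ont P J Y" using 1 2 a unfolding F_op_def by blast
qed

lemma T_op_mono2:
  fixes Ont :: "('p, 'c) axiom set"
  assumes "fst I \<subseteq> fst J" "snd I \<subseteq> snd J" "X \<subseteq> Y"
  shows "T_op Ont P I X \<subseteq> T_op Ont P J Y"
  using assms entails_mono[of "fst I \<union> X" "fst J \<union> Y" Ont] unfolding T_op_def by blast

lemma mono_F_op: "mono (F_op Ont P I)"
  by (rule monoI) (rule F_op_mono2, auto)

lemma mono_IFP: fixes Ont :: "('p, 'c) axiom set" shows "mono (IFP Ont P)"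
proof (rule monoI)
  fix I J :: "('p, 'c) gatom set \<times> ('p, 'c) gatom set"
  assume "I \<le> J"
  then have ij: "fst I \<subseteq> fst J" "snd I \<subseteq> snd J" by (auto simp: less_eq_prod_def)
  have 1: "lfp (T_op Ont P I) \<subseteq> lfp (T_op Ont P J)"
    by (rule lfp_mono) (rule T_op_mono2[OF ij], simp)
  have 2: "gfp (F_op Ont P I) \<subseteq> gfp (F_op Ont P J)"
    by (rule gfp_mono) (rule F_op_mono2[OF ij], simp)
  show "IFP Ont P I \<le> IFP Ont P J" using 1 2 by (simp add: IFP_def less_eq_prod_def)
qed

lemma finite_term_vars: "finite (term_vars t)" by (cases t) auto
lemma finite_term_consts: "finite (term_consts t)" by (cases t) auto
lemma finite_axiom_consts: "finite (axiom_consts ax)" by (cases ax) auto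

lemma finite_rule_vars: "finite (rule_vars r)"
  unfolding rule_vars_def rule_atoms_def atom_vars_def by (auto simp: finite_term_vars)

lemma finite_rule_consts: "finite (rule_consts r)"
  unfolding rule_consts_def rule_atoms_def atom_consts_def by (auto simp: finite_term_consts)

lemma finite_KB_consts: "finite Ont \<Longrightarrow> finite P \<Longrightarrow> finite (KB_consts Ont P)"
  unfolding KB_consts_def by (auto simp: finite_axiom_consts finite_rule_consts)

lemma subst_atom_cong:
  assumes "\<forall>v\<in>atom_vars a. \<sigma> v = \<tau> v"
  shows "subst_atom \<sigma> a = subst_atom \<tau> a"
proof (cases a)
  case (Atom p ts)
  have "map (subst_term \<sigma>) ts = map (subst_term \<tau>) ts"
  proof (rule map_cong)
    fix t assume "t \<in> set ts"
    then have "term_vars t \<subseteq> atom_vars a" using Atom by (auto simp: atom_vars_def)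
    then show "subst_term \<sigma> t = subst_term \<tau> t"
      using assms by (cases t) auto
  qed simp
  then show ?thesis using Atom by simp
qed

lemma ground_rule_cong:
  assumes "\<forall>v\<in>rule_vars r. \<sigma> v = \<tau> v"
  shows "ground_rule \<sigma> r = ground_rule \<tau> r"
proof -
  have c: "subst_atom \<sigma> a = subst_atom \<tau> a" if "a \<in> rule_atoms r" for a
    using assms that by (intro subst_atom_cong) (auto simp: rule_vars_def)
  show ?thesis unfolding ground_rule_def
    using c by (auto simp: rule_atoms_def intro!: map_cong)
qed

lemma finite_grounding:
  fixes Ont :: "('p, 'c) axiom set" and P :: "('p, 'v, 'c) rule set"
  assumes "finite Ont" "finite P"
  shows "finite (grounding Ont P)"
proof -
  let ?C = "KB_consts Ont P"
  have "grounding Ont P \<subseteq> (\<Union>r\<in>P. (\<lambda>\<sigma>. ground_rule \<sigma> r) ` (PiE (rule_vars r) (\<lambda>_. ?C)))"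
  proof
    fix g assume "g \<in> grounding Ont P"
    then obtain \<sigma> r where g: "g = ground_rule \<sigma> r" "r \<in> P" "\<forall>v\<in>rule_vars r. \<sigma> v \<in> ?C"
      unfolding grounding_def by blast
    let ?rs = "restrict \<sigma> (rule_vars r)"
    have "ground_rule \<sigma> r = ground_rule ?rs r" by (rule ground_rule_cong) simp
    moreover have "?rs \<in> PiE (rule_vars r) (\<lambda>_. ?C)" using g by auto
    ultimately show "g \<in> (\<Union>r\<in>P. (\<lambda>\<sigma>. ground_rule \<sigma> r) ` (PiE (rule_vars r) (\<lambda>_. ?C)))"
      using g by blast
  qed
  moreover have "finite (\<Union>r\<in>P. (\<lambda>\<sigma>. ground_rule \<sigma> r) ` (PiE (rule_vars r) (\<lambda>_. ?C)))"
    using assms by (auto intro!: finite_PiE simp: finite_rule_vars finite_KB_consts)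
  ultimately show ?thesis by (rule finite_subset)
qed

lemma finite_grule_atoms: "finite (grule_atoms g)"
  by (auto simp: grule_atoms_def split: prod.splits)

lemma finite_KA: "finite Ont \<Longrightarrow> finite P \<Longrightarrow> finite (KA Ont P)"
  unfolding KA_def by (rule finite_UN_I[OF finite_grounding]) (simp_all add: finite_grule_atoms)

lemma stab2:
  assumes fin: "finite B" and sub: "\<And>n. X n \<subseteq> B \<and> Y n \<subseteq> B"
    and ch: "\<And>n. X n \<subseteq> X (Suc n) \<and> Y n \<subseteq> Y (Suc n)"
  shows "\<exists>n. X (Suc n) = X n \<and> Y (Suc n) = Y n"
proof (rule ccontr)
  assume nt: "\<not> ?thesis"
  have fx: "finite (X n)" "finite (Y n)" for n using sub fin finite_subset by metis+
  have step: "card (X n) + card (Y n) < card (X (Suc n)) + card (Y (Suc n))" for n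
  proof -
    have m: "card (X n) \<le> card (X (Suc n))" "card (Y n) \<le> card (Y (Suc n))"
      using ch[of n] fx by (simp_all add: card_mono)
    have "X n \<subset> X (Suc n) \<or> Y n \<subset> Y (Suc n)" using nt ch by blast
    then have "card (X n) < card (X (Suc n)) \<or> card (Y n) < card (Y (Suc n))"
      using fx psubset_card_mono by metis
    then show ?thesis using m by linarith
  qed
  have lb: "n \<le> card (X n) + card (Y n)" for n
  proof (induction n)
    case (Suc n) then show ?case using step[of n] by linarith
  qed simp
  have b: "card (X n) \<le> card B" "card (Y n) \<le> card B" for n using sub[of n] fin by (simp_all add: card_mono)
  show False using lb[of "2 * card B + 1"] b[of "2 * card B + 1"] by linarith
qed

lemma PN_chain_le:
  assumes "m \<le> n"
  shows "fst (PN Ont P m) \<subseteq> fst (PN Ont P n) \<and> snd (PN Ont P n) \<subseteq> snd (PN Ont P m)"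
  using assms
proof (induction n)
  case 0 then show ?case by simp
next
  case (Suc n)
  show ?case
  proof (cases "m = Suc n")
    case False
    then have "m \<le> n" using Suc by simp
    then show ?thesis using Suc.IH PN_chain[of Ont P n] by blast
  qed simp
qed

theorem theorem1:
  fixes Ont :: "('p, 'c) axiom set" and P :: "('p, 'v, 'c) rule set"
    and IT IF :: "('p, 'c) gatom set"
  assumes "finite Ont" and "finite P"
    and "DL_safe Ont P"
    and "lfp (IFP Ont P) = (IT, IF)"
  shows "(P_omega Ont P, N_omega Ont P) = (IT, KA Ont P - IF)"
proof -
  let ?A = "KA Ont P"
  have finA: "finite ?A" using assms(1,2) by (rule finite_KA)
  have fp: "IFP Ont P (IT, IF) = (IT, IF)"
    using lfp_fixpoint[OF mono_IFP[of Ont P]] assms(4) by simp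
  then have hIT: "lfp (T_op Ont P (IT, IF)) = IT" and hIF: "gfp (F_op Ont P (IT, IF)) = IF"
    by (simp_all add: IFP_def)
  have TIT: "T_op Ont P (IT, IF) IT = IT"
    using lfp_fixpoint[OF mono_T_op[of Ont P "(IT, IF)"]] hIT by simp

  have p1a: "Gamma Ont P (?A - IF) \<subseteq> IT"
    unfolding Gamma_def
  proof (rule lfp_lowerbound)
    show "T_pos Ont P (reduct1 Ont P (?A - IF)) IT \<subseteq> IT"
    proof
      fix a assume a: "a \<in> T_pos Ont P (reduct1 Ont P (?A - IF)) IT"
      have "a \<in> T_op Ont P (IT, IF) IT"
      proof (cases "\<exists>bs. (a, bs) \<in> reduct1 Ont P (?A - IF) \<and> set bs \<subseteq> IT")
        case True
        then obtain bs ns where r: "(a, bs, ns) \<in> grounding Ont P" "set ns \<inter> (?A - IF) = {}"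
          "set bs \<subseteq> IT" unfolding reduct1_def by blast
        have "a \<in> ?A" "set ns \<subseteq> ?A" using ground_in_KA[OF r(1)] by auto
        then have "\<forall>b\<in>set ns. b \<in> IF" "\<forall>ai\<in>set bs. ai \<in> IT \<or> ai \<in> IT" using r by blast+
        then show ?thesis using r(1) \<open>a \<in> ?A\<close> unfolding T_op_def fst_conv snd_conv by blast
      next
        case False
        then have "a \<in> ?A" "entails Ont IT a" using a unfolding T_pos_def by auto
        then show ?thesis unfolding T_op_def by auto
      qed
      then show "a \<in> IT" using TIT by simp
    qed
  qed
  have p1b: "?A - IF \<subseteq> Gamma' Ont P IT"
  proof -
    define G where "G = Gamma' Ont P IT"
    have Gfix: "T_pos Ont P (reduct2 Ont P IT) G = G"
      unfolding G_def Gamma'_def by (rule lfp_fixpoint[OF mono_T_pos])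
    have "?A - G \<subseteq> F_op Ont P (IT, IF) (?A - G)"
    proof
      fix a assume a: "a \<in> ?A - G"
      then have nr: "\<not> (\<exists>bs. (a, bs) \<in> reduct2 Ont P IT \<and> set bs \<subseteq> G)"
        and ne: "\<not> entails Ont G a"
        using Gfix unfolding T_pos_def by blast+
      have c1: "entails_neg Ont IT a
        \<or> (\<forall>ps ns. (a, ps, ns) \<in> grounding Ont P \<longrightarrow>
              (\<exists>ai\<in>set ps. ai \<in> IF \<or> ai \<in> ?A - G) \<or> (\<exists>b\<in>set ns. b \<in> IT))"
      proof (cases "entails_neg Ont IT a")
        case False
        show ?thesis
        proof (rule disjI2, intro allI impI)
          fix ps ns assume g: "(a, ps, ns) \<in> grounding Ont P"
          show "(\<exists>ai\<in>set ps. ai \<in> IF \<or> ai \<in> ?A - G) \<or> (\<exists>b\<in>set ns. b \<in> IT)"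
          proof (cases "set ns \<inter> IT = {}")
            case True
            then have "(a, ps) \<in> reduct2 Ont P IT" using g False unfolding reduct2_def by blast
            then have "\<not> set ps \<subseteq> G" using nr by blast
            then obtain ai where "ai \<in> set ps" "ai \<notin> G" by blast
            moreover have "ai \<in> ?A" using ground_in_KA(2)[OF g] \<open>ai \<in> set ps\<close> by blast
            ultimately show ?thesis by blast
          next
            case False
            then show ?thesis by blast
          qed
        qed
      qed simp
      have sub: "?A - (IF \<union> (?A - G)) \<subseteq> G" by blast
      have c2: "\<not> entails Ont (?A - (IF \<union> (?A - G))) a"
        using ne entails_mono[OF sub] by blast
      show "a \<in> F_op Ont P (IT, IF) (?A - G)"
        using a c1 c2 unfolding F_op_def by simp
    qed
    then have "?A - G \<subseteq> IF" using gfp_upperbound[of "?A - G" "F_op Ont P (IT, IF)"] hIF by simp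
    then show ?thesis unfolding G_def by blast
  qed
  have part1: "fst (PN Ont P n) \<subseteq> IT \<and> ?A - IF \<subseteq> snd (PN Ont P n)" for n
  proof (induction n)
    case 0 then show ?case by simp
  next
    case (Suc n)
    have "Gamma Ont P (snd (PN Ont P n)) \<subseteq> Gamma Ont P (?A - IF)"
      using Suc Gamma_anti by blast
    moreover have "Gamma' Ont P IT \<subseteq> Gamma' Ont P (fst (PN Ont P n))"
      using Suc Gamma'_anti by blast
    ultimately show ?case using p1a p1b by auto
  qed

  have "\<exists>n. fst (PN Ont P (Suc n)) = fst (PN Ont P n)
      \<and> ?A - snd (PN Ont P (Suc n)) = ?A - snd (PN Ont P n)"
    by (rule stab2[OF finA]) (use PN_sub PN_chain in blast)+
  then obtain n0 where n0: "fst (PN Ont P (Suc n0)) = fst (PN Ont P n0)"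
    "?A - snd (PN Ont P (Suc n0)) = ?A - snd (PN Ont P n0)" by blast
  have "snd (PN Ont P (Suc n0)) = snd (PN Ont P n0)"
    using n0(2) PN_sub[of Ont P n0] PN_sub[of Ont P "Suc n0"] by blast
  then have st: "PN Ont P (Suc n0) = PN Ont P n0" using n0(1) by (simp add: prod_eq_iff)
  define Pw where "Pw = fst (PN Ont P n0)"
  define Nw where "Nw = snd (PN Ont P n0)"
  have GPw: "Gamma Ont P Nw = Pw" and GNw: "Gamma' Ont P Pw = Nw"
    using st unfolding Pw_def Nw_def by (simp_all add: prod_eq_iff)
  have const: "PN Ont P (n0 + k) = PN Ont P n0" for k
  proof (induction k)
    case (Suc k)
    have "PN Ont P (n0 + Suc k) = (Gamma Ont P (snd (PN Ont P (n0 + k))), Gamma' Ont P (fst (PN Ont P (n0 + k))))"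
      by simp
    also have "\<dots> = PN Ont P n0" using Suc GPw GNw unfolding Pw_def Nw_def by simp
    finally show ?case .
  qed simp
  have Pom: "P_omega Ont P = Pw"
  proof -
    have "fst (PN Ont P n) \<subseteq> Pw" for n
    proof (cases "n \<le> n0")
      case True then show ?thesis using PN_chain_le unfolding Pw_def by blast
    next
      case False
      then obtain k where "n = n0 + k" by (metis le_add_diff_inverse nat_le_linear)
      then show ?thesis using const unfolding Pw_def by simp
    qed
    then show ?thesis unfolding P_omega_def Pw_def by blast
  qed
  have Nom: "N_omega Ont P = Nw"
  proof -
    have "Nw \<subseteq> snd (PN Ont P n)" for n
    proof (cases "n \<le> n0")
      case True then show ?thesis using PN_chain_le unfolding Nw_def by blast
    next
      case False
      then obtain k where "n = n0 + k" by (metis le_add_diff_inverse nat_le_linear)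
      then show ?thesis using const unfolding Nw_def by simp
    qed
    then show ?thesis unfolding N_omega_def Nw_def by blast
  qed
  have NwA: "Nw \<subseteq> ?A" using PN_sub unfolding Nw_def by blast

  define I where "I = (Pw, ?A - Nw)"
  have q1: "lfp (T_op Ont P I) \<subseteq> Pw"
  proof (rule lfp_lowerbound)
    have Pfix: "T_pos Ont P (reduct1 Ont P Nw) Pw = Pw"
      using lfp_fixpoint[OF mono_T_pos] GPw unfolding Gamma_def by metis
    show "T_op Ont P I Pw \<subseteq> Pw"
    proof
      fix a assume a: "a \<in> T_op Ont P I Pw"
      have "a \<in> T_pos Ont P (reduct1 Ont P Nw) Pw"
      proof (cases "a \<in> {a \<in> ?A. entails Ont (Pw \<union> Pw) a}")
        case True then show ?thesis unfolding T_pos_def by simp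
      next
        case False
        then obtain ps ns where r: "(a, ps, ns) \<in> grounding Ont P" "\<forall>ai\<in>set ps. ai \<in> Pw"
          "\<forall>b\<in>set ns. b \<in> ?A - Nw"
          using a unfolding T_op_def I_def by auto
        then have "(a, ps) \<in> reduct1 Ont P Nw" unfolding reduct1_def by blast
        then show ?thesis using r unfolding T_pos_def by blast
      qed
      then show "a \<in> Pw" using Pfix by simp
    qed
  qed
  have q2: "gfp (F_op Ont P I) \<subseteq> ?A - Nw"
  proof -
    define Y where "Y = gfp (F_op Ont P I)"
    have YF: "Y \<subseteq> F_op Ont P I Y"
      unfolding Y_def using gfp_fixpoint[OF mono_F_op[of Ont P I]] by simp
    have YA: "Y \<subseteq> ?A" using YF unfolding F_op_def by blast
    have Nfix: "T_pos Ont P (reduct2 Ont P Pw) Nw = Nw"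
      using lfp_fixpoint[OF mono_T_pos] GNw unfolding Gamma'_def by metis
    have "Nw \<subseteq> Nw - Y"
      unfolding GNw[symmetric] Gamma'_def
    proof (rule lfp_lowerbound)
      show "T_pos Ont P (reduct2 Ont P Pw) (lfp (T_pos Ont P (reduct2 Ont P Pw)) - Y)
            \<subseteq> lfp (T_pos Ont P (reduct2 Ont P Pw)) - Y"
        unfolding GNw[unfolded Gamma'_def]
      proof
        fix a assume a: "a \<in> T_pos Ont P (reduct2 Ont P Pw) (Nw - Y)"
        have "a \<in> T_pos Ont P (reduct2 Ont P Pw) Nw"
          using a monoD[OF mono_T_pos, of "Nw - Y" Nw] by blast
        then have aN: "a \<in> Nw" using Nfix by simp
        have "a \<notin> Y"
        proof
          assume aY: "a \<in> Y"
          then have aF: "a \<in> F_op Ont P I Y" using YF by blast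
          show False
          proof (cases "\<exists>bs. (a, bs) \<in> reduct2 Ont P Pw \<and> set bs \<subseteq> Nw - Y")
            case True
            then obtain bs ns where r: "(a, bs, ns) \<in> grounding Ont P" "set ns \<inter> Pw = {}"
              "\<not> entails_neg Ont Pw a" "set bs \<subseteq> Nw - Y" unfolding reduct2_def by blast
            have "\<forall>ps ns. (a, ps, ns) \<in> grounding Ont P \<longrightarrow>
              (\<exists>ai\<in>set ps. ai \<in> ?A - Nw \<or> ai \<in> Y) \<or> (\<exists>b\<in>set ns. b \<in> Pw)"
              using aF r(3) unfolding F_op_def I_def fst_conv snd_conv by blast
            then have "(\<exists>ai\<in>set bs. ai \<in> ?A - Nw \<or> ai \<in> Y) \<or> (\<exists>b\<in>set ns. b \<in> Pw)"
              using r(1) by blast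
            then show False using r(2,4) by blast
          next
            case False
            then have e: "entails Ont (Nw - Y) a" using a unfolding T_pos_def by blast
            have "?A - ((?A - Nw) \<union> Y) = Nw - Y" using NwA by blast
            then show False using aF e unfolding F_op_def I_def by auto
          qed
        qed
        then show "a \<in> Nw - Y" using aN by blast
      qed
    qed
    then show ?thesis using YA unfolding Y_def by blast
  qed
  have "IFP Ont P I \<le> I" using q1 q2 unfolding IFP_def I_def by (simp add: less_eq_prod_def)
  then have "lfp (IFP Ont P) \<le> I" by (rule lfp_lowerbound)
  then have q: "IT \<subseteq> Pw" "IF \<subseteq> ?A - Nw" using assms(4) unfolding I_def by (simp_all add: less_eq_prod_def)
  have "Pw \<subseteq> IT" "?A - IF \<subseteq> Nw" using part1[of n0] unfolding Pw_def Nw_def by auto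
  then show ?thesis using q NwA Pom Nom by auto
qed

end
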